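(* Let $\mathbf{m}$ be diagonal with strictly positive diagonal, fix a realization of $\mathbf{R}$, and let $\hat b=(\mathbf{x}'\mathbf{m}\mathbf{R}\mathbf{x})^{+}\mathbf{x}'\mathbf{m}\mathbf{R}y$. Define the missing imputed estimator $\hat\mu^{MI}=\frac1n\mathbf{1}'\big(I_{kn}-(\mathbf{R}-I_{kn})\mathbf{x}(\mathbf{x}'\mathbf{m}\mathbf{R}\mathbf{x})^{+}\mathbf{x}'\mathbf{m}\big)\mathbf{R}y$ and the generalized regression estimator $\hat\mu^{GR}=\frac1n\mathbf{1}'\pi^{-1}\mathbf{R}y-\big(\frac1n\mathbf{1}'\pi^{-1}\mathbf{R}-\frac1n\mathbf{1}'\big)\mathbf{x}\hat b$. If there exists $\mathbf{t}\in\mathbb{R}^{(k+p)\times k}$ with $\mathbf{R}\mathbf{m}\mathbf{x}\mathbf{t}=\mathbf{R}(I_{kn}-\pi^{-1})\mathbf{1}$, then $\hat\mu^{MI}=\hat\mu^{GR}$.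
   Context: $k$ arms, $n$ units, $p$ covariates. $y\in\mathbb{R}^{kn}$ stacks potential outcomes of the $k$ arms. $\mathbf{R}$ is the $kn\times kn$ diagonal matrix of assignment indicators (ordered arm by arm), $\pi=\mathrm{E}[\mathbf{R}]$ with entries in $(0,1)$. $\mathbf{1}=I_k\otimes1_n$; $\mathbf{x}=[\mathbf{1}\mid1_k\otimes X]$ for a covariate matrix $X\in\mathbb{R}^{n\times p}$; $A^+$ is the Moore–Penrose inverse. *)

theory Defs
  imports "Jordan_Normal_Form.Matrix"
begin

definition mp_inverse :: "real mat \<Rightarrow> real mat" where
  "mp_inverse A = (THE B. B \<in> carrier_mat (dim_col A) (dim_row A) \<and>
      A * B * A = A \<and> B * A * B = B \<and> (A * B)\<^sup>T = A * B \<and> (B * A)\<^sup>T = B * A)"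

text \<open>Index of unit u (u < n) in arm a (a < k) in the stacked kn-vector: a * n + u
  (ordering arm by arm).  The matrix 1 = I_k \<otimes> 1_n.\<close>
definition ones_blk :: "nat \<Rightarrow> nat \<Rightarrow> real mat" where
  "ones_blk k n = mat (k * n) k (\<lambda>(i, b). if i div n = b then 1 else 0)"

text \<open>Design matrix x = [1 | 1_k \<otimes> X] for X an n x p covariate matrix.\<close>
definition design_mat :: "nat \<Rightarrow> nat \<Rightarrow> real mat \<Rightarrow> real mat" where
  "design_mat k n X = mat (k * n) (k + dim_col X)
     (\<lambda>(i, c). if c < k then (if i div n = c then 1 else 0) else X $$ (i mod n, c - k))"

definition b_hat :: "real mat \<Rightarrow> real mat \<Rightarrow> real mat \<Rightarrow> real vec \<Rightarrow> real vec" where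
  "b_hat x m R y = (mp_inverse (x\<^sup>T * m * R * x) * x\<^sup>T * m * R) *\<^sub>v y"

definition mu_MI :: "nat \<Rightarrow> nat \<Rightarrow> real mat \<Rightarrow> real mat \<Rightarrow> real mat \<Rightarrow> real mat \<Rightarrow> real vec \<Rightarrow> real vec" where
  "mu_MI n N ones x m R y =
     (1 / real n) \<cdot>\<^sub>v ((ones\<^sup>T * (1\<^sub>m N - (R - 1\<^sub>m N) * x * mp_inverse (x\<^sup>T * m * R * x) * x\<^sup>T * m) * R) *\<^sub>v y)"

text \<open>Generalized regression estimator; pinv is the matrix \<pi>^{-1}.\<close>
definition mu_GR :: "nat \<Rightarrow> real mat \<Rightarrow> real mat \<Rightarrow> real mat \<Rightarrow> real mat \<Rightarrow> real mat \<Rightarrow> real vec \<Rightarrow> real vec" where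
  "mu_GR n ones x m R pinv y =
     (1 / real n) \<cdot>\<^sub>v ((ones\<^sup>T * pinv * R) *\<^sub>v y)
     - (((1 / real n) \<cdot>\<^sub>m (ones\<^sup>T * pinv * R) - (1 / real n) \<cdot>\<^sub>m ones\<^sup>T) * x) *\<^sub>v b_hat x m R y"

end

theory Submission imports Defs "Jordan_Normal_Form.Determinant" begin

lemma zzT_zero:
  fixes Z :: "real mat"
  assumes Z: "Z \<in> carrier_mat r c" and h: "Z * Z\<^sup>T = 0\<^sub>m r r"
  shows "Z = 0\<^sub>m r c"
proof (rule eq_matI)
  fix i j assume i: "i < dim_row (0\<^sub>m r c)" and j: "j < dim_col (0\<^sub>m r c)"
  have "(Z * Z\<^sup>T) $$ (i,i) = 0" using h i by simp
  hence "(\<Sum>l<c. Z $$ (i,l) * Z $$ (i,l)) = 0"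
    using Z i by (simp add: scalar_prod_def lessThan_atLeast0)
  hence "\<forall>l\<in>{..<c}. Z $$ (i,l) * Z $$ (i,l) = 0"
    by (subst sum_nonneg_eq_0_iff[symmetric], auto)
  thus "Z $$ (i,j) = 0\<^sub>m r c $$ (i,j)" using i j by simp
qed (use Z in auto)

lemma zTz_zero:
  fixes Z :: "real mat"
  assumes Z: "Z \<in> carrier_mat r c" and h: "Z\<^sup>T * Z = 0\<^sub>m c c"
  shows "Z = 0\<^sub>m r c"
proof -
  have "Z\<^sup>T = 0\<^sub>m c r" using zzT_zero[of "Z\<^sup>T" c r] h Z by simp
  hence "(Z\<^sup>T)\<^sup>T = (0\<^sub>m c r)\<^sup>T" by simp
  thus ?thesis by simp
qed

lemma sym_kernel:
  fixes B N :: "real mat"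
  assumes B: "B \<in> carrier_mat q q" and N: "N \<in> carrier_mat q c" and s: "B\<^sup>T = B"
    and h: "B * (B * N) = 0\<^sub>m q c"
  shows "B * N = 0\<^sub>m q c"
proof -
  have "(B * N)\<^sup>T * (B * N) = N\<^sup>T * (B * (B * N))"
    using B N s by (simp add: transpose_mult[of B q q N c] assoc_mult_mat[of _ c q _ q _ c])
  also have "\<dots> = 0\<^sub>m c c" using h N by simp
  finally show ?thesis using zTz_zero[of "B*N" q c] B N by simp
qed

lemma transpose_smult_mat: "(c \<cdot>\<^sub>m A)\<^sup>T = c \<cdot>\<^sub>m A\<^sup>T"
  by (rule eq_matI) auto

fun hm :: "nat \<Rightarrow> real list \<Rightarrow> real mat \<Rightarrow> real mat" where
  "hm q [] B = 0\<^sub>m q q"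
| "hm q (c # cs) B = c \<cdot>\<^sub>m 1\<^sub>m q + B * hm q cs B"

lemma hm_carrier[simp]: "B \<in> carrier_mat q q \<Longrightarrow> hm q cs B \<in> carrier_mat q q"
  by (induct cs) auto

lemma hm_comm: assumes B: "B \<in> carrier_mat q q" shows "B * hm q cs B = hm q cs B * B"
proof (induct cs)
  case Nil then show ?case using B by simp
next
  case (Cons c cs)
  have "B * hm q (c # cs) B = c \<cdot>\<^sub>m B + B * (B * hm q cs B)"
    using B by (simp add: mult_add_distrib_mat[of _ q q _ q] mult_smult_distrib[of _ q q _ q] assoc_mult_mat[of _ q q _ q _ q])
  also have "\<dots> = c \<cdot>\<^sub>m B + B * (hm q cs B * B)" using Cons by simp
  also have "\<dots> = hm q (c # cs) B * B"
    using B by (simp add: add_mult_distrib_mat[of _ q q] mult_smult_assoc_mat[of _ q q _ q] assoc_mult_mat[of _ q q _ q _ q])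
  finally show ?case .
qed

lemma hm_sym: assumes B: "B \<in> carrier_mat q q" and s: "B\<^sup>T = B"
  shows "(hm q cs B)\<^sup>T = hm q cs B"
proof (induct cs)
  case Nil then show ?case by simp
next
  case (Cons c cs)
  have "(hm q (c # cs) B)\<^sup>T = c \<cdot>\<^sub>m 1\<^sub>m q + (hm q cs B)\<^sup>T * B\<^sup>T"
    using B by (simp add: transpose_add[of _ q q] transpose_mult[of B q q _ q] transpose_smult_mat)
  also have "\<dots> = hm q (c # cs) B" using Cons s hm_comm[OF B, of cs] by simp
  finally show ?case .
qed

lemma hm_entry: assumes B: "B \<in> carrier_mat q q" and a: "a < q" and b: "b < q"
  shows "(B ^\<^sub>m j * hm q cs B) $$ (a,b) = (\<Sum>i<length cs. cs!i * (B ^\<^sub>m (j+i)) $$ (a,b))"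
proof (induct cs arbitrary: j)
  case Nil then show ?case using B a b by simp
next
  case (Cons c cs)
  have e: "B ^\<^sub>m j * hm q (c # cs) B = c \<cdot>\<^sub>m B ^\<^sub>m j + B ^\<^sub>m (Suc j) * hm q cs B"
    using B by (simp add: mult_add_distrib_mat[of _ q q _ q] mult_smult_distrib[of _ q q _ q] assoc_mult_mat[of _ q q _ q _ q])
  have "(B ^\<^sub>m j * hm q (c # cs) B) $$ (a,b) = c * (B ^\<^sub>m j) $$ (a,b) + (B ^\<^sub>m (Suc j) * hm q cs B) $$ (a,b)"
  proof -
    have d: "dim_row (hm q cs B) = q" "dim_col (hm q cs B) = q" using hm_carrier[OF B, of cs] by auto
    show ?thesis unfolding e using B a b d by (simp add: index_add_mat)
  qed
  also have "\<dots> = c * (B ^\<^sub>m j) $$ (a,b) + (\<Sum>i<length cs. cs!i * (B ^\<^sub>m (Suc j+i)) $$ (a,b))"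
    using Cons[of "Suc j"] by (simp del: pow_mat.simps)
  also have "\<dots> = (\<Sum>i<length (c#cs). (c#cs)!i * (B ^\<^sub>m (j+i)) $$ (a,b))"
    by (simp add: sum.lessThan_Suc_shift del: sum.lessThan_Suc)
  finally show ?case .
qed

lemma collapse: fixes B N :: "real mat" assumes B: "B \<in> carrier_mat q q" and s: "B\<^sup>T = B"
  shows "N \<in> carrier_mat q c \<Longrightarrow> B ^\<^sub>m (Suc j) * N = 0\<^sub>m q c \<Longrightarrow> B * N = 0\<^sub>m q c"
proof (induct j arbitrary: N)
  case 0 then show ?case using B by simp
next
  case (Suc j)
  have "B ^\<^sub>m (Suc j) * (B * N) = B ^\<^sub>m (Suc (Suc j)) * N"
    using B Suc(2) by (simp add: assoc_mult_mat[of _ q q _ q _ c] assoc_mult_mat[of _ q q _ q _ q])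
  hence "B * (B * N) = 0\<^sub>m q c" using Suc B by simp
  thus ?case using sym_kernel[OF B Suc(2) s] by simp
qed

lemma sum_split_shift: fixes j m :: nat shows "(\<Sum>i<j+m. f i) = (\<Sum>i<j. f i) + (\<Sum>i<m. f (j+i)) "
  by (induct m) (auto simp: add.assoc)

lemma annih: fixes B :: "real mat" assumes B: "B \<in> carrier_mat q q"
  shows "\<exists>j c cs. c \<noteq> 0 \<and> B ^\<^sub>m j * hm q (c#cs) B = 0\<^sub>m q q"
proof -
  define Nn where "Nn = q * q"
  define Mt where "Mt = mat (Suc Nn) (Suc Nn) (\<lambda>(r,i). if r < Nn then (B ^\<^sub>m i) $$ (r div q, r mod q) else 0)"
  have Mt: "Mt \<in> carrier_mat (Suc Nn) (Suc Nn)" unfolding Mt_def by simp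
  have "Mt\<^sup>T *\<^sub>v unit_vec (Suc Nn) Nn = 0\<^sub>v (Suc Nn)"
    by (rule eq_vecI) (auto simp: Mt_def scalar_prod_def)
  hence "\<exists>w. w \<in> carrier_vec (Suc Nn) \<and> w \<noteq> 0\<^sub>v (Suc Nn) \<and> Mt\<^sup>T *\<^sub>v w = 0\<^sub>v (Suc Nn)"
    by (intro exI[of _ "unit_vec (Suc Nn) Nn"]) simp
  hence "det (Mt\<^sup>T) = 0"
    using det_0_iff_vec_prod_zero[of "Mt\<^sup>T" "Suc Nn"] Mt by simp
  hence "det Mt = 0" using det_transpose[OF Mt] by simp
  then obtain v where v: "v \<in> carrier_vec (Suc Nn)" "v \<noteq> 0\<^sub>v (Suc Nn)" "Mt *\<^sub>v v = 0\<^sub>v (Suc Nn)"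
    using det_0_iff_vec_prod_zero[OF Mt] by auto
  have ex: "\<exists>i. i < Suc Nn \<and> v $ i \<noteq> 0"
  proof (rule ccontr)
    assume "\<not> ?thesis"
    hence "v = 0\<^sub>v (Suc Nn)" using v(1) by (intro eq_vecI) auto
    thus False using v(2) by simp
  qed
  define j where "j = (LEAST i. i < Suc Nn \<and> v $ i \<noteq> 0)"
  have j: "j < Suc Nn" "v $ j \<noteq> 0" using LeastI_ex[OF ex] unfolding j_def by auto
  have below: "\<And>i. i < j \<Longrightarrow> v $ i = 0"
  proof -
    fix i assume "i < j"
    hence "\<not> (i < Suc Nn \<and> v $ i \<noteq> 0)" unfolding j_def by (rule not_less_Least)
    thus "v $ i = 0" using \<open>i < j\<close> j(1) by auto
  qed
  define L where "L = map (\<lambda>i. v $ (j + i)) [0..<Suc Nn - j]"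
  have Lne: "L \<noteq> []" using j(1) unfolding L_def by simp
  then obtain c cs where Lc: "L = c # cs" by (cases L) auto
  have u: "[0..<Suc Nn - j] = 0 # [Suc 0..<Suc Nn - j]" using j(1) by (simp add: upt_conv_Cons)
  have c: "c = v $ j" using Lc unfolding L_def u by simp
  have "B ^\<^sub>m j * hm q L B = 0\<^sub>m q q"
  proof (rule eq_matI)
    fix a b assume a: "a < dim_row (0\<^sub>m q q)" and b: "b < dim_col (0\<^sub>m q q)"
    hence a: "a < q" and b: "b < q" by auto
    have r: "a * q + b < Nn"
    proof -
      have "a*q+b < Suc a * q" using b by simp
      moreover have "Suc a * q \<le> q*q" using a by (intro mult_le_mono1) simp
      ultimately show ?thesis unfolding Nn_def by simp
    qed
    have dm: "(a * q + b) div q = a" "(a * q + b) mod q = b" using b by auto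
    have "0 = (Mt *\<^sub>v v) $ (a * q + b)" using v(3) r by simp
    also have "\<dots> = (\<Sum>i<Suc Nn. (B ^\<^sub>m i) $$ (a, b) * v $ i)"
      using r v(1) dm unfolding Mt_def by (simp add: scalar_prod_def lessThan_atLeast0)
    also have "\<dots> = (\<Sum>i<j. (B ^\<^sub>m i) $$ (a, b) * v $ i) + (\<Sum>i<Suc Nn - j. (B ^\<^sub>m (j+i)) $$ (a, b) * v $ (j+i))"
      using sum_split_shift[of "\<lambda>i. (B ^\<^sub>m i) $$ (a, b) * v $ i" j "Suc Nn - j"] j(1) by simp
    also have "\<dots> = (\<Sum>i<Suc Nn - j. (B ^\<^sub>m (j+i)) $$ (a, b) * v $ (j+i))"
      using below by simp
    also have "\<dots> = (B ^\<^sub>m j * hm q L B) $$ (a,b)"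
      unfolding hm_entry[OF B a b] L_def by (auto simp: mult.commute intro: sum.cong)
    finally show "(B ^\<^sub>m j * hm q L B) $$ (a, b) = 0\<^sub>m q q $$ (a, b)" using a b by simp
  qed (use carrier_matD[OF B] carrier_matD[OF hm_carrier[OF B, of L]] in auto)
  thus ?thesis using Lc c j(2) by blast
qed

definition penrose :: "real mat \<Rightarrow> real mat \<Rightarrow> bool" where
  "penrose A B \<longleftrightarrow> A * B * A = A \<and> B * A * B = B \<and> (A * B)\<^sup>T = A * B \<and> (B * A)\<^sup>T = B * A"

lemma mp_exists_sym: fixes B :: "real mat"
  assumes B: "B \<in> carrier_mat q q" and s: "B\<^sup>T = B"
  shows "\<exists>C. C \<in> carrier_mat q q \<and> penrose B C"
proof -
  obtain j c cs where c: "c \<noteq> 0" and ann: "B ^\<^sub>m j * hm q (c#cs) B = 0\<^sub>m q q"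
    using annih[OF B] by blast
  define H where "H = hm q cs B"
  have H: "H \<in> carrier_mat q q" unfolding H_def using B by simp
  define M where "M = hm q (c#cs) B"
  have M: "M \<in> carrier_mat q q" unfolding M_def using B by simp
  have BM: "B * M = 0\<^sub>m q q"
  proof (cases j)
    case 0
    hence "M = 0\<^sub>m q q" using ann M B unfolding M_def by simp
    thus ?thesis using B by simp
  next
    case (Suc j')
    show ?thesis using collapse[OF B s M, of j'] ann Suc unfolding M_def by simp
  qed
  have Me: "M = c \<cdot>\<^sub>m 1\<^sub>m q + B * H" unfolding M_def H_def by simp
  define F where "F = (-1/c) \<cdot>\<^sub>m H"
  have F: "F \<in> carrier_mat q q" unfolding F_def using H by simp
  have BBF: "B * (B * F) = B"
  proof (rule eq_matI)
    fix a b assume ab: "a < dim_row B" "b < dim_col B"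
    have "(B * M) $$ (a,b) = 0" using BM ab B by simp
    hence "c * B $$ (a,b) + (B * (B * H)) $$ (a,b) = 0"
      using ab B H unfolding Me
      by (simp add: mult_add_distrib_mat[of _ q q _ q] mult_smult_distrib[of _ q q _ q])
    moreover have "(B * (B * F)) $$ (a,b) = (-1/c) * (B * (B * H)) $$ (a,b)"
      using ab B H unfolding F_def by (simp add: mult_smult_distrib[of _ q q _ q])
    ultimately have "c * (B * (B * F)) $$ (a,b) = c * B $$ (a,b)" using c by (simp add: field_simps)
    thus "(B * (B * F)) $$ (a,b) = B $$ (a,b)" using c by simp
  qed (use B F in auto)
  have FB: "F * B = B * F" unfolding F_def H_def using hm_comm[OF B, of cs] B
    by (simp add: mult_smult_distrib[of _ q q _ q] mult_smult_assoc_mat[of _ q q _ q])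
  have Fs: "F\<^sup>T = F" unfolding F_def H_def using hm_sym[OF B s] by (simp add: transpose_smult_mat)
  have R1: "\<And>X. X \<in> carrier_mat q q \<Longrightarrow> F * (B * X) = B * (F * X)"
  proof -
    fix X :: "real mat" assume X: "X \<in> carrier_mat q q"
    have "F * (B * X) = (F * B) * X" using assoc_mult_mat[OF F B X] by simp
    also have "\<dots> = (B * F) * X" using FB by simp
    also have "\<dots> = B * (F * X)" using assoc_mult_mat[OF B F X] by simp
    finally show "F * (B * X) = B * (F * X)" .
  qed
  have R2: "\<And>X. X \<in> carrier_mat q q \<Longrightarrow> B * (B * (F * X)) = B * X"
  proof -
    fix X :: "real mat" assume X: "X \<in> carrier_mat q q"
    have "B * (B * (F * X)) = B * ((B * F) * X)" using assoc_mult_mat[OF B F X] by simp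
    also have "\<dots> = (B * (B * F)) * X" using assoc_mult_mat[OF B mult_carrier_mat[OF B F] X] by simp
    finally show "B * (B * (F * X)) = B * X" using BBF by simp
  qed
  define C where "C = F * (B * F)"
  have C: "C \<in> carrier_mat q q" unfolding C_def using B F by simp
  have CC: "C = B * (F * F)" unfolding C_def using R1[of F] F by simp
  have "B * C * B = B" unfolding CC using B F
    by (simp add: assoc_mult_mat[of _ q q _ q _ q] FB BBF R1 R2)
  moreover have "C * B * C = C" unfolding CC using B F
    by (simp add: assoc_mult_mat[of _ q q _ q _ q] FB BBF R1 R2)
  moreover have "(B * C)\<^sup>T = B * C" unfolding CC using B F
    by (simp add: assoc_mult_mat[of _ q q _ q _ q] FB BBF R1 R2 transpose_mult[of _ q q _ q] s Fs)
  moreover have "(C * B)\<^sup>T = C * B" unfolding CC using B F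
    by (simp add: assoc_mult_mat[of _ q q _ q _ q] FB BBF R1 R2 transpose_mult[of _ q q _ q] s Fs)
  ultimately show ?thesis using C unfolding penrose_def by blast
qed

lemma penrose_unique: fixes A B C :: "real mat"
  assumes A: "A \<in> carrier_mat q q" and B: "B \<in> carrier_mat q q" and C: "C \<in> carrier_mat q q"
    and pB: "penrose A B" and pC: "penrose A C"
  shows "B = C"
proof -
  note as = assoc_mult_mat[of _ q q _ q _ q]
  note tm = transpose_mult[of _ q q _ q]
  have ABA: "A * (B * A) = A" and BAB: "B * (A * B) = B" and AB: "B\<^sup>T * A\<^sup>T = A * B" and BA: "A\<^sup>T * B\<^sup>T = B * A"
    using pB A B unfolding penrose_def by (auto simp: as tm)
  have ACA: "A * (C * A) = A" and CAC: "C * (A * C) = C" and AC: "C\<^sup>T * A\<^sup>T = A * C" and CA: "A\<^sup>T * C\<^sup>T = C * A"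
    using pC A C unfolding penrose_def by (auto simp: as tm)
  have At1: "A\<^sup>T = A\<^sup>T * (C\<^sup>T * A\<^sup>T)"
  proof -
    have "A\<^sup>T = (A * (C * A))\<^sup>T" using ACA by simp
    also have "\<dots> = A\<^sup>T * (C\<^sup>T * A\<^sup>T)" using A C by (simp add: tm as)
    finally show ?thesis .
  qed
  have At2: "A\<^sup>T = A\<^sup>T * (B\<^sup>T * A\<^sup>T)"
  proof -
    have "A\<^sup>T = (A * (B * A))\<^sup>T" using ABA by simp
    also have "\<dots> = A\<^sup>T * (B\<^sup>T * A\<^sup>T)" using A B by (simp add: tm as)
    finally show ?thesis .
  qed
  have "B = B * (B\<^sup>T * A\<^sup>T)" using BAB AB by simp
  also have "\<dots> = B * (B\<^sup>T * (A\<^sup>T * (C\<^sup>T * A\<^sup>T)))" using At1 by simp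
  also have "\<dots> = B * ((B\<^sup>T * A\<^sup>T) * (C\<^sup>T * A\<^sup>T))" using A B C by (simp add: as)
  also have "\<dots> = B * ((A * B) * (A * C))" using AB AC by simp
  also have "\<dots> = (B * (A * B)) * (A * C)" using A B C by (simp add: as)
  also have "\<dots> = B * (A * C)" using BAB by simp
  finally have b: "B = B * (A * C)" .
  have "C = (A\<^sup>T * C\<^sup>T) * C" using CAC CA A C by (simp add: as)
  also have "\<dots> = ((A\<^sup>T * (B\<^sup>T * A\<^sup>T)) * C\<^sup>T) * C" using At2 by simp
  also have "\<dots> = ((A\<^sup>T * B\<^sup>T) * (A\<^sup>T * C\<^sup>T)) * C" using A B C by (simp add: as)
  also have "\<dots> = ((B * A) * (C * A)) * C" using BA CA by simp
  also have "\<dots> = B * (A * (C * (A * C)))" using A B C by (simp add: as)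
  also have "\<dots> = B * (A * C)" using CAC by simp
  finally show ?thesis using b by simp
qed

lemma mp_sym: fixes B :: "real mat"
  assumes B: "B \<in> carrier_mat q q" and s: "B\<^sup>T = B"
  shows "mp_inverse B \<in> carrier_mat q q \<and> penrose B (mp_inverse B)"
proof -
  obtain C where C: "C \<in> carrier_mat q q" "penrose B C" using mp_exists_sym[OF B s] by blast
  have d: "dim_row B = q" "dim_col B = q" using B by auto
  have "\<exists>!X. X \<in> carrier_mat (dim_col B) (dim_row B) \<and>
      B * X * B = B \<and> X * B * X = X \<and> (B * X)\<^sup>T = B * X \<and> (X * B)\<^sup>T = X * B"
  proof (rule ex1I[of _ C])
    show "C \<in> carrier_mat (dim_col B) (dim_row B) \<and>
      B * C * B = B \<and> C * B * C = C \<and> (B * C)\<^sup>T = B * C \<and> (C * B)\<^sup>T = C * B"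
      using C d unfolding penrose_def by auto
  next
    fix X assume "X \<in> carrier_mat (dim_col B) (dim_row B) \<and>
      B * X * B = B \<and> X * B * X = X \<and> (B * X)\<^sup>T = B * X \<and> (X * B)\<^sup>T = X * B"
    thus "X = C" using penrose_unique[OF B _ C(1) _ C(2), of X] d unfolding penrose_def by auto
  qed
  from theI'[OF this] show ?thesis unfolding mp_inverse_def penrose_def using d by auto
qed


lemma smult_mat_vec_assoc: "dim_vec v = dim_col A \<Longrightarrow> (c \<cdot>\<^sub>m A) *\<^sub>v v = c \<cdot>\<^sub>v (A *\<^sub>v (v :: real vec))"
  by (rule eq_vecI) (auto intro!: smult_scalar_prod_distrib[of _ "dim_col A"])

lemma smult_minus_vec: "u \<in> carrier_vec d \<Longrightarrow> w \<in> carrier_vec d \<Longrightarrow>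
   c \<cdot>\<^sub>v (u - w) = c \<cdot>\<^sub>v u - c \<cdot>\<^sub>v (w :: real vec)"
  by (rule eq_vecI) (auto simp: algebra_simps)

lemma smult_minus_mat: "A \<in> carrier_mat r d \<Longrightarrow> B \<in> carrier_mat r d \<Longrightarrow>
   c \<cdot>\<^sub>m A - c \<cdot>\<^sub>m B = c \<cdot>\<^sub>m (A - (B :: real mat))"
  by (rule eq_matI) (auto simp: algebra_simps)

lemma diag_T: "(mat_diag n f)\<^sup>T = mat_diag n f"
  by (rule eq_matI) (auto simp: mat_diag_def)

lemma mat_minus_zero_eq: fixes X Y :: "real mat"
  assumes "X - Y = 0\<^sub>m r c" "X \<in> carrier_mat r c" "Y \<in> carrier_mat r c"
  shows "Y = X"
proof (rule eq_matI)
  fix i j assume ij: "i < dim_row X" "j < dim_col X"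
  have "(X - Y) $$ (i,j) = 0" using assms ij by simp
  moreover have "(X - Y) $$ (i,j) = X $$ (i,j) - Y $$ (i,j)" using assms(3) ij assms(2) by (intro index_minus_mat) auto
  ultimately show "Y $$ (i,j) = X $$ (i,j)" by simp
qed (use assms in auto)

lemma key_K:
  fixes x :: "real mat" and md rd :: "nat \<Rightarrow> real"
  assumes x: "x \<in> carrier_mat N q"
    and nn: "\<forall>i < N. md i * rd i \<ge> 0"
  defines "G \<equiv> x\<^sup>T * mat_diag N md * mat_diag N rd * x"
  shows "G\<^sup>T = G" and "G * mp_inverse G * (x\<^sup>T * mat_diag N md * mat_diag N rd) = x\<^sup>T * mat_diag N md * mat_diag N rd"
proof -
  define m where "m = mat_diag N md"
  define R where "R = mat_diag N rd"
  define S where "S = mat_diag N (\<lambda>i. sqrt (md i * rd i))"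
  have m: "m \<in> carrier_mat N N" and R: "R \<in> carrier_mat N N" and S: "S \<in> carrier_mat N N"
    unfolding m_def R_def S_def by auto
  have SS: "S * S = m * R" unfolding S_def m_def R_def
by (simp, rule eq_matI) (use nn in \<open>auto simp: mat_diag_def\<close>)
  have St: "S\<^sup>T = S" unfolding S_def by (rule diag_T)
  define A where "A = S * x"
  have A: "A \<in> carrier_mat N q" unfolding A_def using S x by simp
  have V: "x\<^sup>T * m * R = A\<^sup>T * S"
    unfolding A_def using x S m R
by (simp add: transpose_mult[OF S x] St SS[symmetric] assoc_mult_mat[of _ q N _ N _ N])
  have GA: "G = A\<^sup>T * A" unfolding G_def m_def[symmetric] R_def[symmetric] V
unfolding A_def using x S by (simp add: assoc_mult_mat[of _ q N _ N _ q])
  have G: "G \<in> carrier_mat q q" unfolding GA using A by simp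
  show Gs: "G\<^sup>T = G" unfolding GA using A by (simp add: transpose_mult[of _ q N _ q])
  define Gp where "Gp = mp_inverse G"
  have Gp: "Gp \<in> carrier_mat q q" and pen: "penrose G Gp" using mp_sym[OF G Gs] unfolding Gp_def by auto
  define E where "E = G * Gp"
  have E: "E \<in> carrier_mat q q" unfolding E_def using G Gp by simp
  have EG: "E * G = G" using pen unfolding E_def penrose_def by simp
  have Es: "E\<^sup>T = E" using pen unfolding E_def penrose_def by simp
  have "G * E = G"
  proof -
    have "G * E = G\<^sup>T * E\<^sup>T" using Gs Es by simp
    also have "\<dots> = (E * G)\<^sup>T" using transpose_mult[OF E G] by simp
    finally show ?thesis using EG Gs by simp
  qed
  define Z where "Z = (1\<^sub>m q - E) * A\<^sup>T"
  have Z: "Z \<in> carrier_mat q N" unfolding Z_def by (rule mult_carrier_mat[OF minus_carrier_mat[OF E] transpose_carrier_mat[THEN iffD2, OF A]])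
  have IEG: "(1\<^sub>m q - E) * G = 0\<^sub>m q q"
    using minus_mult_distrib_mat[of "1\<^sub>m q" q q E G q] E G EG by simp
  have IEt: "(1\<^sub>m q - E)\<^sup>T = 1\<^sub>m q - E" using transpose_minus[of "1\<^sub>m q" q q E] E Es by simp
  have IE: "1\<^sub>m q - E \<in> carrier_mat q q" by (rule minus_carrier_mat[OF E])
  have AT: "A\<^sup>T \<in> carrier_mat q N" using A by simp
  have AIE: "A * (1\<^sub>m q - E) \<in> carrier_mat N q" using A IE by (rule mult_carrier_mat)
  have ATA: "A\<^sup>T * A \<in> carrier_mat q q" using AT A by (rule mult_carrier_mat)
  have "Z * Z\<^sup>T = (1\<^sub>m q - E) * A\<^sup>T * (A * (1\<^sub>m q - E))"
    unfolding Z_def using transpose_mult[OF IE AT] IEt by simp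
  also have "\<dots> = (1\<^sub>m q - E) * (A\<^sup>T * (A * (1\<^sub>m q - E)))" by (rule assoc_mult_mat[OF IE AT AIE])
  also have "A\<^sup>T * (A * (1\<^sub>m q - E)) = (A\<^sup>T * A) * (1\<^sub>m q - E)" by (rule assoc_mult_mat[OF AT A IE, symmetric])
  also have "(1\<^sub>m q - E) * ((A\<^sup>T * A) * (1\<^sub>m q - E)) = ((1\<^sub>m q - E) * G) * (1\<^sub>m q - E)"
    unfolding GA by (rule assoc_mult_mat[OF IE ATA IE, symmetric])
  also have "\<dots> = 0\<^sub>m q q" unfolding IEG using E by simp
  finally have "Z = 0\<^sub>m q N" using zzT_zero[OF Z] by simp
  hence "A\<^sup>T - E * A\<^sup>T = 0\<^sub>m q N" unfolding Z_def using minus_mult_distrib_mat[of "1\<^sub>m q" q q E "A\<^sup>T" N] E A by simp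
  hence EA: "E * A\<^sup>T = A\<^sup>T" by (rule mat_minus_zero_eq) (use E A in auto)
  show "G * mp_inverse G * (x\<^sup>T * mat_diag N md * mat_diag N rd) = x\<^sup>T * mat_diag N md * mat_diag N rd"
    unfolding m_def[symmetric] R_def[symmetric] Gp_def[symmetric] E_def[symmetric] V
using EA assoc_mult_mat[OF E transpose_carrier_mat[THEN iffD2, OF A] S] by simp
qed


theorem mainTheorem9:
  fixes k n :: nat and X :: "real mat" and y :: "real vec"
    and mdiag rdiag pidiag :: "nat \<Rightarrow> real"
  assumes X: "X \<in> carrier_mat n p"
    and y: "y \<in> carrier_vec (k * n)"
    and m_pos: "\<forall>i < k * n. mdiag i > 0"
    and R_ind: "\<forall>i < k * n. rdiag i = 0 \<or> rdiag i = 1"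
    and pi_rng: "\<forall>i < k * n. 0 < pidiag i \<and> pidiag i < 1"
    and t_ex: "\<exists>t \<in> carrier_mat (k + p) k.
      mat_diag (k * n) rdiag * mat_diag (k * n) mdiag * design_mat k n X * t =
      mat_diag (k * n) rdiag * (1\<^sub>m (k * n) - mat_diag (k * n) (\<lambda>i. 1 / pidiag i)) * ones_blk k n"
  shows "mu_MI n (k * n) (ones_blk k n) (design_mat k n X) (mat_diag (k * n) mdiag)
           (mat_diag (k * n) rdiag) y =
         mu_GR n (ones_blk k n) (design_mat k n X) (mat_diag (k * n) mdiag)
           (mat_diag (k * n) rdiag) (mat_diag (k * n) (\<lambda>i. 1 / pidiag i)) y"
proof -
  define N where "N = k * n"
  define q where "q = k + p"
  define x where "x = design_mat k n X"
  define Ob where "Ob = ones_blk k n"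
  define m where "m = mat_diag N mdiag"
  define R where "R = mat_diag N rdiag"
  define P where "P = mat_diag N (\<lambda>i. 1 / pidiag i)"
  define I :: "real mat" where "I = 1\<^sub>m N"
  have x: "x \<in> carrier_mat N q" unfolding x_def design_mat_def N_def q_def using X by auto
  have xT: "x\<^sup>T \<in> carrier_mat q N" using x by simp
  have Ob: "Ob \<in> carrier_mat N k" unfolding Ob_def ones_blk_def N_def by auto
  have ObT: "Ob\<^sup>T \<in> carrier_mat k N" using Ob by simp
  have m: "m \<in> carrier_mat N N" and R: "R \<in> carrier_mat N N" and P: "P \<in> carrier_mat N N"
    and I: "I \<in> carrier_mat N N" unfolding m_def R_def P_def I_def by auto
  have nn: "\<forall>i < N. mdiag i * rdiag i \<ge> 0" using m_pos R_ind unfolding N_def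
    by (metis less_eq_real_def mult_nonneg_nonneg order_refl zero_le_one)
  define V where "V = x\<^sup>T * m * R"
  define G where "G = x\<^sup>T * m * R * x"
  define Gp where "Gp = mp_inverse G"
  have V: "V \<in> carrier_mat q N" unfolding V_def using xT m R by simp
  have GV: "G = V * x" unfolding G_def V_def ..
  have G: "G \<in> carrier_mat q q" unfolding GV using V x by simp
  have Gs: "G\<^sup>T = G" and K: "G * Gp * V = V"
    using key_K[OF x nn] unfolding G_def Gp_def V_def m_def R_def by auto
  have Gp: "Gp \<in> carrier_mat q q" using mp_sym[OF G Gs] unfolding Gp_def by simp
  obtain t where t: "t \<in> carrier_mat q k" and th: "R * m * x * t = R * (I - P) * Ob"
    using t_ex unfolding R_def m_def x_def P_def I_def Ob_def N_def q_def by blast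
  define U where "U = Ob\<^sup>T * (I - P) * R"
  have U: "U \<in> carrier_mat k N" unfolding U_def using ObT I P R by (blast intro: mult_carrier_mat minus_carrier_mat)
  have UV: "U = t\<^sup>T * V"
  proof -
    have IP: "I - P \<in> carrier_mat N N" using P by (simp add: minus_carrier_mat)
    have IPt: "(I - P)\<^sup>T = I - P" using transpose_minus[OF I P] unfolding I_def P_def by (simp add: diag_T)
    have Rt: "R\<^sup>T = R" unfolding R_def by (rule diag_T)
    have mt: "m\<^sup>T = m" unfolding m_def by (rule diag_T)
    have RIP: "R * (I - P) \<in> carrier_mat N N" using R IP by simp
    have "(R * (I - P) * Ob)\<^sup>T = Ob\<^sup>T * (R * (I - P))\<^sup>T" using transpose_mult[OF RIP Ob] .
    also have "(R * (I - P))\<^sup>T = (I - P) * R" using transpose_mult[OF R IP] IPt Rt by simp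
    also have "Ob\<^sup>T * ((I - P) * R) = U" unfolding U_def using assoc_mult_mat[OF ObT IP R] by simp
    finally have 1: "U = (R * (I - P) * Ob)\<^sup>T" by simp
    have Rm: "R * m \<in> carrier_mat N N" using R m by simp
    have Rmx: "R * m * x \<in> carrier_mat N q" using Rm x by simp
    have "(R * m * x * t)\<^sup>T = t\<^sup>T * (R * m * x)\<^sup>T" using transpose_mult[OF Rmx t] .
    also have "(R * m * x)\<^sup>T = x\<^sup>T * (R * m)\<^sup>T" using transpose_mult[OF Rm x] .
    also have "(R * m)\<^sup>T = m * R" using transpose_mult[OF R m] Rt mt by simp
    also have "x\<^sup>T * (m * R) = V" unfolding V_def using assoc_mult_mat[OF xT m R] by simp
    finally have 2: "(R * m * x * t)\<^sup>T = t\<^sup>T * V" .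
    show ?thesis using 1 2 th by simp
  qed
  define Q where "Q = x * (Gp * V)"
  have Q: "Q \<in> carrier_mat N N" unfolding Q_def using x Gp V by simp
  have UQ: "U * Q = U"
  proof -
    have "U * Q = t\<^sup>T * ((V * x) * (Gp * V))" unfolding UV Q_def using t V x Gp
      by (simp add: assoc_mult_mat[of _ k q _ N _ N] assoc_mult_mat[of _ q N _ q _ N])
    also have "\<dots> = t\<^sup>T * (G * Gp * V)" unfolding GV[symmetric] using G Gp V
      by (simp add: assoc_mult_mat[of _ q q _ q _ N])
    also have "\<dots> = U" unfolding K UV ..
    finally show ?thesis .
  qed
  define a where "a = Ob\<^sup>T * R"
  define b where "b = Ob\<^sup>T * P * R"
  define Y where "Y = (R - I) * x * Gp * x\<^sup>T * m"
  have RI: "R - I \<in> carrier_mat N N" using I by (rule minus_carrier_mat)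
  have c1: "(R-I)*x \<in> carrier_mat N q" using RI x by (rule mult_carrier_mat)
  have c2: "(R-I)*x*Gp \<in> carrier_mat N q" using c1 Gp by (rule mult_carrier_mat)
  have c3: "(R-I)*x*Gp*x\<^sup>T \<in> carrier_mat N N" using c2 xT by (rule mult_carrier_mat)
  have Y: "Y \<in> carrier_mat N N" unfolding Y_def using c3 m by (rule mult_carrier_mat)
  have mR: "m*R \<in> carrier_mat N N" using m R by (rule mult_carrier_mat)
  have c4: "x\<^sup>T*(m*R) \<in> carrier_mat q N" using xT mR by (rule mult_carrier_mat)
  have c5: "Gp*(x\<^sup>T*(m*R)) \<in> carrier_mat q N" using Gp c4 by (rule mult_carrier_mat)
  have VV: "V = x\<^sup>T*(m*R)" unfolding V_def by (rule assoc_mult_mat[OF xT m R])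
  have YR: "Y * R = (R - I) * Q"
  proof -
    have "Y * R = (R-I)*x*Gp*x\<^sup>T*(m*R)" unfolding Y_def by (rule assoc_mult_mat[OF c3 m R])
    also have "\<dots> = (R-I)*x*Gp*(x\<^sup>T*(m*R))" by (rule assoc_mult_mat[OF c2 xT mR])
    also have "\<dots> = (R-I)*x*(Gp*(x\<^sup>T*(m*R)))" by (rule assoc_mult_mat[OF c1 Gp c4])
    also have "\<dots> = (R-I)*(x*(Gp*(x\<^sup>T*(m*R))))" by (rule assoc_mult_mat[OF RI x c5])
    also have "\<dots> = (R-I)*Q" unfolding Q_def VV ..
    finally show ?thesis .
  qed
  have a: "a \<in> carrier_mat k N" unfolding a_def using ObT R by (rule mult_carrier_mat)
  have ObP: "Ob\<^sup>T * P \<in> carrier_mat k N" using ObT P by (rule mult_carrier_mat)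
  have b: "b \<in> carrier_mat k N" unfolding b_def using ObP R by (rule mult_carrier_mat)
  have ObY: "Ob\<^sup>T * Y \<in> carrier_mat k N" using ObT Y by (rule mult_carrier_mat)
  have E1: "Ob\<^sup>T * (I - Y) * R = a - (a - Ob\<^sup>T) * Q"
  proof -
    have "Ob\<^sup>T * (I - Y) = Ob\<^sup>T * I - Ob\<^sup>T * Y"
      by (rule mult_minus_distrib_mat[OF ObT I Y])
    also have "Ob\<^sup>T * I = Ob\<^sup>T" unfolding I_def using ObT by simp
    finally have "Ob\<^sup>T * (I - Y) * R = (Ob\<^sup>T - Ob\<^sup>T * Y) * R" by simp
    also have "\<dots> = a - Ob\<^sup>T * Y * R"
      unfolding a_def by (rule minus_mult_distrib_mat[OF ObT ObY R])
    also have "Ob\<^sup>T * Y * R = Ob\<^sup>T * (Y * R)" by (rule assoc_mult_mat[OF ObT Y R])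
    also have "\<dots> = (Ob\<^sup>T * (R - I)) * Q" unfolding YR by (rule assoc_mult_mat[OF ObT RI Q, symmetric])
    also have "Ob\<^sup>T * (R - I) = Ob\<^sup>T * R - Ob\<^sup>T * I" by (rule mult_minus_distrib_mat[OF ObT R I])
    also have "Ob\<^sup>T * I = Ob\<^sup>T" unfolding I_def using ObT by simp
    finally show ?thesis unfolding a_def .
  qed
  have E4: "U = a - b"
  proof -
    have "Ob\<^sup>T * (I - P) = Ob\<^sup>T * I - Ob\<^sup>T * P" by (rule mult_minus_distrib_mat[OF ObT I P])
    also have "Ob\<^sup>T * I = Ob\<^sup>T" unfolding I_def using ObT by simp
    finally have "U = (Ob\<^sup>T - Ob\<^sup>T * P) * R" unfolding U_def by simp
    also have "\<dots> = a - b" unfolding a_def b_def by (rule minus_mult_distrib_mat[OF ObT ObP R])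
    finally show ?thesis .
  qed
  have E5: "U * Q = a * Q - b * Q" unfolding E4 by (rule minus_mult_distrib_mat[OF a b Q])
  have E2: "(a - Ob\<^sup>T) * Q = a * Q - Ob\<^sup>T * Q" by (rule minus_mult_distrib_mat[OF a ObT Q])
  have E3: "(b - Ob\<^sup>T) * Q = b * Q - Ob\<^sup>T * Q" by (rule minus_mult_distrib_mat[OF b ObT Q])
  have aQ: "a * Q \<in> carrier_mat k N" using a Q by (rule mult_carrier_mat)
  have bQ: "b * Q \<in> carrier_mat k N" using b Q by (rule mult_carrier_mat)
  have OQ: "Ob\<^sup>T * Q \<in> carrier_mat k N" using ObT Q by (rule mult_carrier_mat)
  have da: "dim_row a = k" "dim_col a = N" using a by auto
  have db: "dim_row b = k" "dim_col b = N" using b by auto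
  have daQ: "dim_row (a*Q) = k" "dim_col (a*Q) = N" using aQ by auto
  have dbQ: "dim_row (b*Q) = k" "dim_col (b*Q) = N" using bQ by auto
  have dOQ: "dim_row (Ob\<^sup>T*Q) = k" "dim_col (Ob\<^sup>T*Q) = N" using OQ by auto
  have L: "Ob\<^sup>T * (I - Y) * R = b - (b - Ob\<^sup>T) * Q"
    unfolding E1 E2 E3
  proof (rule eq_matI)
    fix i j assume ij: "i < dim_row (b - (b * Q - Ob\<^sup>T * Q))" "j < dim_col (b - (b * Q - Ob\<^sup>T * Q))"
    have i: "i < k" and j: "j < N" using ij unfolding index_minus_mat(2,3) dbQ dOQ by auto
    have eq: "a * Q - b * Q = a - b"
    proof -
      have "a * Q - b * Q = U * Q" by (rule E5[symmetric])
      also have "\<dots> = U" by (rule UQ)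
      also have "\<dots> = a - b" by (rule E4)
      finally show ?thesis .
    qed
    have "(a * Q - b * Q) $$ (i,j) = (a - b) $$ (i,j)" unfolding eq ..
    hence e: "(a * Q) $$ (i,j) - (b * Q) $$ (i,j) = a $$ (i,j) - b $$ (i,j)"
      using i j daQ dbQ db by (simp only: index_minus_mat) 
    have l: "(a - (a * Q - Ob\<^sup>T * Q)) $$ (i, j) = a $$ (i,j) - ((a * Q) $$ (i,j) - (Ob\<^sup>T * Q) $$ (i,j))"
      using i j by (simp only: index_minus_mat daQ dOQ)
    have r: "(b - (b * Q - Ob\<^sup>T * Q)) $$ (i, j) = b $$ (i,j) - ((b * Q) $$ (i,j) - (Ob\<^sup>T * Q) $$ (i,j))"
      using i j by (simp only: index_minus_mat dbQ dOQ)
    show "(a - (a * Q - Ob\<^sup>T * Q)) $$ (i, j) = (b - (b * Q - Ob\<^sup>T * Q)) $$ (i, j)"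
      unfolding l r using e by linarith
  qed (simp_all only: index_minus_mat da db daQ dbQ dOQ)
  define cc where "cc = 1 / real n"
  have yN: "y \<in> carrier_vec N" using y unfolding N_def .
  have bO: "b - Ob\<^sup>T \<in> carrier_mat k N" using ObT by (rule minus_carrier_mat)
  have bOQ: "(b - Ob\<^sup>T) * Q \<in> carrier_mat k N" using bO Q by (rule mult_carrier_mat)
  have GpV: "Gp * V \<in> carrier_mat q N" using Gp V by (rule mult_carrier_mat)
  have cbO: "cc \<cdot>\<^sub>m (b - Ob\<^sup>T) \<in> carrier_mat k N" using bO by simp
  have cbOx: "cc \<cdot>\<^sub>m (b - Ob\<^sup>T) * x \<in> carrier_mat k q" using cbO x by (rule mult_carrier_mat)
  have MI: "mu_MI n N Ob x m R y = cc \<cdot>\<^sub>v ((Ob\<^sup>T * (I - Y) * R) *\<^sub>v y)"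
    unfolding mu_MI_def Y_def I_def Gp_def G_def cc_def ..
  have bh: "b_hat x m R y = (Gp * V) *\<^sub>v y"
  proof -
    have "mp_inverse (x\<^sup>T * m * R * x) * x\<^sup>T * m * R = Gp * V"
    proof -
      have "Gp * x\<^sup>T * m = Gp * (x\<^sup>T * m)" by (rule assoc_mult_mat[OF Gp xT m])
      hence "Gp * x\<^sup>T * m * R = Gp * (x\<^sup>T * m) * R" by simp
      also have "\<dots> = Gp * V" unfolding V_def by (rule assoc_mult_mat[OF Gp mult_carrier_mat[OF xT m] R])
      finally show ?thesis unfolding Gp_def G_def .
    qed
    thus ?thesis unfolding b_hat_def by simp
  qed
  have "mu_GR n Ob x m R P y = cc \<cdot>\<^sub>v (b *\<^sub>v y) - ((cc \<cdot>\<^sub>m b - cc \<cdot>\<^sub>m Ob\<^sup>T) * x) *\<^sub>v ((Gp * V) *\<^sub>v y)"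
    unfolding mu_GR_def bh b_def cc_def ..
  also have "cc \<cdot>\<^sub>m b - cc \<cdot>\<^sub>m Ob\<^sup>T = cc \<cdot>\<^sub>m (b - Ob\<^sup>T)" by (rule smult_minus_mat[OF b ObT])
  also have "(cc \<cdot>\<^sub>m (b - Ob\<^sup>T) * x) *\<^sub>v ((Gp * V) *\<^sub>v y) = ((cc \<cdot>\<^sub>m (b - Ob\<^sup>T) * x) * (Gp * V)) *\<^sub>v y"
    by (rule assoc_mult_mat_vec[OF cbOx GpV yN, symmetric])
  also have "(cc \<cdot>\<^sub>m (b - Ob\<^sup>T) * x) * (Gp * V) = cc \<cdot>\<^sub>m (b - Ob\<^sup>T) * Q"
    unfolding Q_def by (rule assoc_mult_mat[OF cbO x GpV])
  also have "cc \<cdot>\<^sub>m (b - Ob\<^sup>T) * Q = cc \<cdot>\<^sub>m ((b - Ob\<^sup>T) * Q)" by (rule mult_smult_assoc_mat[OF bO Q])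
  also have "(cc \<cdot>\<^sub>m ((b - Ob\<^sup>T) * Q)) *\<^sub>v y = cc \<cdot>\<^sub>v (((b - Ob\<^sup>T) * Q) *\<^sub>v y)"
    by (rule smult_mat_vec_assoc) (use bOQ yN in auto)
  also have "cc \<cdot>\<^sub>v (b *\<^sub>v y) - cc \<cdot>\<^sub>v (((b - Ob\<^sup>T) * Q) *\<^sub>v y) = cc \<cdot>\<^sub>v (b *\<^sub>v y - ((b - Ob\<^sup>T) * Q) *\<^sub>v y)"
    by (rule smult_minus_vec[OF mult_mat_vec_carrier[OF b yN] mult_mat_vec_carrier[OF bOQ yN], symmetric])
  also have "b *\<^sub>v y - ((b - Ob\<^sup>T) * Q) *\<^sub>v y = (b - (b - Ob\<^sup>T) * Q) *\<^sub>v y"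
    by (rule minus_mult_distrib_mat_vec[OF b bOQ yN, symmetric])
  finally have main: "mu_MI n N Ob x m R y = mu_GR n Ob x m R P y" unfolding MI L by simp
  show ?thesis using main unfolding N_def Ob_def x_def m_def R_def P_def .
qed

end
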